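(* Suppose each interface function $g_k$ belongs to $C^2[0,L_x]$ and $\varepsilon$ is piecewise constant (constant on each $\Omega_k$). Then there is a constant $C_9>0$ independent of $h$ such that $$\sum_{j=1}^{S}\operatorname{meas}\big(\operatorname{supp}_{S_j}|\varepsilon-\varepsilon_h|\big)\le C_9 h.$$
   Context: $H,L_x>0$, $\Omega=(0,L_x)\times(-H,H)$. There are $I\ge1$ interfaces given by $g_k:[0,L_x]\to\mathbb R$ ($k=1,\dots,I$) whose graphs are separated from each other and from $x_2=\pm H$ by some $\delta>0$; $\Omega_k$ ($k=1,\dots,I+1$) is the region of $\Omega$ between the graphs of $g_{k-1}$ and $g_k$ ($g_0\equiv -H$, $g_{I+1}\equiv H$). $\varepsilon:\Omega\to\mathbb C$ is the relative permittivity. Slices: $-H=h_0<h_1<\dots<h_S=H$, $S_j=\{(x_1,x_2)\in\Omega:h_{j-1}\le x_2<h_j\}$, $\Delta h_j=h_j-h_{j-1}$, $h=\max_j\Delta h_j$, with $h/\min_j\Delta h_j\le C_\Delta$ for a fixed constant $C_\Delta>0$, and every point where $g_k'=0$ lies on an inter-slice line $x_2=h_j$. The stairstep approximation is $\varepsilon_h(x_1,x_2)=\varepsilon(x_1,h_{j-1/2})$ on $S_j$, $h_{j-1/2}=(h_{j-1}+h_j)/2$. $\operatorname{supp}_{S_j}|\varepsilon-\varepsilon_h|$ is the set of points of $S_j$ where $\varepsilon\ne\varepsilon_h$, and meas is Lebesgue measure. *)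

theory Defs
  imports "HOL-Analysis.Analysis"
begin

definition Omega :: "real \<Rightarrow> real \<Rightarrow> (real \<times> real) set" where
  "Omega Lx H = {0<..<Lx} \<times> {-H<..<H}"

definition gext :: "real \<Rightarrow> nat \<Rightarrow> (nat \<Rightarrow> real \<Rightarrow> real) \<Rightarrow> nat \<Rightarrow> real \<Rightarrow> real" where
  "gext H I g k x = (if k = 0 then -H else if k = I + 1 then H else g k x)"

definition layer :: "real \<Rightarrow> real \<Rightarrow> nat \<Rightarrow> (nat \<Rightarrow> real \<Rightarrow> real) \<Rightarrow> nat \<Rightarrow> (real \<times> real) set" where
  "layer Lx H I g k = {p \<in> Omega Lx H. gext H I g (k - 1) (fst p) < snd p \<and> snd p < gext H I g k (fst p)}"

definition slice :: "real \<Rightarrow> real \<Rightarrow> (nat \<Rightarrow> real) \<Rightarrow> nat \<Rightarrow> (real \<times> real) set" where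
  "slice Lx H hs j = {p \<in> Omega Lx H. hs (j - 1) \<le> snd p \<and> snd p < hs j}"

text \<open>Stairstep approximation: eps_h(x1,x2) = eps(x1, h_(j-1/2)) on S_j
  (value 0 outside the union of the slices, which is irrelevant).\<close>
definition eps_h :: "real \<Rightarrow> real \<Rightarrow> (nat \<Rightarrow> real) \<Rightarrow> nat \<Rightarrow> (real \<times> real \<Rightarrow> complex) \<Rightarrow> real \<times> real \<Rightarrow> complex" where
  "eps_h Lx H hs S eps p =
     (if \<exists>j\<in>{1..S}. p \<in> slice Lx H hs j
      then eps (fst p, (hs ((THE j. j \<in> {1..S} \<and> p \<in> slice Lx H hs j) - 1)
                       + hs (THE j. j \<in> {1..S} \<and> p \<in> slice Lx H hs j)) / 2)
      else 0)"

definition supp_diff :: "real \<Rightarrow> real \<Rightarrow> (nat \<Rightarrow> real) \<Rightarrow> nat \<Rightarrow> (real \<times> real \<Rightarrow> complex) \<Rightarrow> nat \<Rightarrow> (real \<times> real) set" where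
  "supp_diff Lx H hs S eps j = {p \<in> slice Lx H hs j. eps p \<noteq> eps_h Lx H hs S eps p}"

definition hmax :: "(nat \<Rightarrow> real) \<Rightarrow> nat \<Rightarrow> real" where
  "hmax hs S = Max ((\<lambda>j. hs j - hs (j - 1)) ` {1..S})"

definition hmin :: "(nat \<Rightarrow> real) \<Rightarrow> nat \<Rightarrow> real" where
  "hmin hs S = Min ((\<lambda>j. hs j - hs (j - 1)) ` {1..S})"

end

theory Submission
  imports Defs
begin

lemma meas_times:
  fixes E F :: "real set"
  assumes "E \<in> sets borel" "F \<in> sets borel"
  shows "measure lebesgue (E \<times> F) = measure lborel E * measure lborel F"
proof -
  have EF: "E \<times> F \<in> sets (borel :: (real\<times>real) measure)"
    using assms by (simp add: borel_prod[symmetric])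
  have "measure lebesgue (E \<times> F) = measure (lborel :: (real\<times>real) measure) (E \<times> F)"
    using EF by simp
  also have "\<dots> = measure (lborel \<Otimes>\<^sub>M lborel) (E \<times> F)" by (simp add: lborel_prod)
  also have "\<dots> = measure lborel E * measure lborel F"
    using assms by (simp add: measure_def lborel.emeasure_pair_measure_Times enn2real_mult)
  finally show ?thesis .
qed

lemma cont_meas:
  fixes g :: "real \<Rightarrow> real"
  assumes "continuous_on {0..Lx} g" "0 < Lx"
  shows "{x\<in>{0<..<Lx}. a \<le> g x \<and> g x < b} \<in> sets borel"
proof -
  define G where "G x = g (max 0 (min Lx x))" for x
  have "continuous_on UNIV G" unfolding G_def
    by (rule continuous_on_compose2[OF assms(1)]) (use assms(2) in \<open>auto intro!: continuous_intros\<close>)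
  then have [measurable]: "G \<in> borel_measurable borel" by (rule borel_measurable_continuous_onI)
  have "{x\<in>{0<..<Lx}. a \<le> g x \<and> g x < b} = {x\<in>space borel. 0 < x \<and> x < Lx \<and> a \<le> G x \<and> G x < b}"
    by (auto simp: G_def)
  also have "\<dots> \<in> sets borel" by measurable
  finally show ?thesis .
qed

lemma layer_eq:
  fixes eps :: "real \<times> real \<Rightarrow> complex"
  assumes c: "\<forall>k\<in>{1..I+1}. \<forall>p\<in>layer Lx H I g k. eps p = c k"
    and x: "0 < x" "x < Lx" and yH: "-H < y" "y < H" and mH: "-H < m" "m < H"
    and nog: "\<forall>k\<in>{1..I}. \<not> (a \<le> g k x \<and> g k x < b)"
    and ya: "a \<le> y" "y < b" and ma: "a \<le> m" "m < b"
  shows "eps (x,y) = eps (x,m)"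
proof -
  let ?P = "\<lambda>k. y < gext H I g k x"
  have PI: "?P (I+1)" using yH by (simp add: gext_def)
  define k0 where "k0 = (LEAST k. ?P k)"
  have Pk0: "?P k0" unfolding k0_def by (rule LeastI[of ?P, OF PI])
  have k0le: "k0 \<le> I+1" unfolding k0_def by (rule Least_le[of ?P, OF PI])
  have k0nz: "k0 \<noteq> 0" using Pk0 yH by (cases "k0 = 0") (auto simp: gext_def)
  have nP: "\<not> ?P (k0-1)" unfolding k0_def
    by (rule not_less_Least) (use k0nz in \<open>simp add: k0_def[symmetric]\<close>)
  have same1: "(y < gext H I g k x \<longleftrightarrow> m < gext H I g k x)" if "k \<le> I+1" for k
  proof (cases "k = 0 \<or> k = I+1")
    case True then show ?thesis using yH mH by (auto simp: gext_def)
  next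
    case False
    then have "k \<in> {1..I}" using that by auto
    then have "\<not> (a \<le> g k x \<and> g k x < b)" using nog by blast
    then show ?thesis using False ya ma by (auto simp: gext_def)
  qed
  have same2: "(gext H I g k x < y \<longleftrightarrow> gext H I g k x < m)" if "k \<le> I+1" for k
  proof (cases "k = 0 \<or> k = I+1")
    case True then show ?thesis using yH mH by (auto simp: gext_def)
  next
    case False
    then have "k \<in> {1..I}" using that by auto
    then have "\<not> (a \<le> g k x \<and> g k x < b)" using nog by blast
    then show ?thesis using False ya ma by (auto simp: gext_def)
  qed
  have neq: "gext H I g (k0-1) x \<noteq> y"
  proof (cases "k0 - 1 = 0")
    case True then show ?thesis using yH by (auto simp: gext_def)
  next
    case False
    then have "k0 - 1 \<in> {1..I}" using k0le by auto
    then have "\<not> (a \<le> g (k0-1) x \<and> g (k0-1) x < b)" using nog by blast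
    then show ?thesis using False ya k0le by (auto simp: gext_def)
  qed
  have lo: "gext H I g (k0-1) x < y" using nP neq by auto
  have in1: "(x,y) \<in> layer Lx H I g k0"
    using lo Pk0 x yH by (auto simp: layer_def Omega_def)
  have in2: "(x,m) \<in> layer Lx H I g k0"
    using lo Pk0 x mH same1[OF k0le] same2[of "k0-1"] k0le by (auto simp: layer_def Omega_def)
  have k0in: "k0 \<in> {1..I+1}" using k0le k0nz by auto
  show ?thesis using c k0in in1 in2 by auto
qed

theorem lemma5:
  fixes H Lx \<delta> C\<^sub>\<Delta> :: real and I :: nat
    and g g' g'' :: "nat \<Rightarrow> real \<Rightarrow> real"
    and eps :: "real \<times> real \<Rightarrow> complex"
  assumes H_pos: "H > 0" and Lx_pos: "Lx > 0" and I_pos: "I \<ge> 1"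
    and C2: "\<And>k x. k \<in> {1..I} \<Longrightarrow> x \<in> {0..Lx} \<Longrightarrow>
                (g k has_real_derivative g' k x) (at x within {0..Lx})"
            "\<And>k x. k \<in> {1..I} \<Longrightarrow> x \<in> {0..Lx} \<Longrightarrow>
                (g' k has_real_derivative g'' k x) (at x within {0..Lx})"
            "\<And>k. k \<in> {1..I} \<Longrightarrow> continuous_on {0..Lx} (g'' k)"
    and delta_pos: "\<delta> > 0"
    and separated: "\<And>k x. k \<in> {1..I+1} \<Longrightarrow> x \<in> {0..Lx} \<Longrightarrow>
                      gext H I g k x - gext H I g (k - 1) x \<ge> \<delta>"
    and pw_const: "\<exists>c :: nat \<Rightarrow> complex. \<forall>k\<in>{1..I+1}. \<forall>p\<in>layer Lx H I g k. eps p = c k"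
    and C_Delta_pos: "C\<^sub>\<Delta> > 0"
  shows "\<exists>C9 > 0. \<forall>(S::nat) (hs::nat \<Rightarrow> real).
           S \<ge> 1 \<and> hs 0 = -H \<and> hs S = H \<and> (\<forall>j\<in>{1..S}. hs (j - 1) < hs j)
           \<and> hmax hs S \<le> C\<^sub>\<Delta> * hmin hs S
           \<and> (\<forall>k\<in>{1..I}. \<forall>x\<in>{0..Lx}. g' k x = 0 \<longrightarrow> (\<exists>j\<in>{0..S}. g k x = hs j))
           \<longrightarrow> (\<Sum>j=1..S. measure lebesgue (supp_diff Lx H hs S eps j)) \<le> C9 * hmax hs S"
proof -
  obtain c :: "nat \<Rightarrow> complex" where c: "\<forall>k\<in>{1..I+1}. \<forall>p\<in>layer Lx H I g k. eps p = c k"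
    using pw_const by blast
  have gcont: "continuous_on {0..Lx} (g k)" if "k \<in> {1..I}" for k
    using C2(1)[OF that] by (meson DERIV_continuous continuous_on_eq_continuous_within)
  define C9 where "C9 = real I * Lx + 1"
  have C9pos: "C9 > 0" using Lx_pos by (simp add: C9_def add_nonneg_pos)
  show ?thesis
  proof (intro exI[of _ C9] conjI allI impI C9pos)
    fix S :: nat and hs :: "nat \<Rightarrow> real"
    assume A: "S \<ge> 1 \<and> hs 0 = -H \<and> hs S = H \<and> (\<forall>j\<in>{1..S}. hs (j - 1) < hs j)
           \<and> hmax hs S \<le> C\<^sub>\<Delta> * hmin hs S
           \<and> (\<forall>k\<in>{1..I}. \<forall>x\<in>{0..Lx}. g' k x = 0 \<longrightarrow> (\<exists>j\<in>{0..S}. g k x = hs j))"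
    then have S1: "S \<ge> 1" and h0: "hs 0 = -H" and hS: "hs S = H"
      and step: "\<And>j. j \<in> {1..S} \<Longrightarrow> hs (j - 1) < hs j" by auto
    have mono: "hs i < hs j" if "i < j" "j \<le> S" for i j
      using that
    proof (induction j)
      case 0 then show ?case by simp
    next
      case (Suc j)
      have st: "hs j < hs (Suc j)" using step[of "Suc j"] Suc.prems by auto
      show ?case
      proof (cases "i = j")
        case True then show ?thesis using st by simp
      next
        case False then show ?thesis using Suc st by auto
      qed
    qed
    have monole: "hs i \<le> hs j" if "i \<le> j" "j \<le> S" for i j
      using mono[of i j] that by (cases "i = j") auto
    have hmax_ge: "hs j - hs (j-1) \<le> hmax hs S" if "j \<in> {1..S}" for j
      unfolding hmax_def using that by (intro Max_ge) auto
    have hmax_nn: "0 \<le> hmax hs S" using hmax_ge[of 1] step[of 1] S1 by auto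
    have epsh: "eps_h Lx H hs S eps p = eps (fst p, (hs (j-1) + hs j)/2)"
      if j: "j \<in> {1..S}" and p: "p \<in> slice Lx H hs j" for j p
    proof -
      have uniq: "j' = j" if "j' \<in> {1..S}" "p \<in> slice Lx H hs j'" for j'
      proof (rule ccontr)
        assume ne: "j' \<noteq> j"
        show False
        proof (cases "j' < j")
          case True
          then have "hs j' \<le> hs (j-1)" using j by (intro monole) auto
          then show False using p that(2) by (auto simp: slice_def)
        next
          case False
          then have "hs j \<le> hs (j'-1)" using ne that(1) by (intro monole) auto
          then show False using p that(2) by (auto simp: slice_def)
        qed
      qed
      have "(THE j. j \<in> {1..S} \<and> p \<in> slice Lx H hs j) = j"
      proof (rule the_equality)
        show "j \<in> {1..S} \<and> p \<in> slice Lx H hs j" using j p by simp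
      next
        fix j' assume "j' \<in> {1..S} \<and> p \<in> slice Lx H hs j'"
        then show "j' = j" using uniq by blast
      qed
      then show ?thesis using j p unfolding eps_h_def by auto
    qed
    define F where "F k j = {x\<in>{0<..<Lx}. hs (j-1) \<le> g k x \<and> g k x < hs j}" for k j
    define Ar where "Ar k j = F k j \<times> {hs (j-1)..<hs j}" for k j
    have Fb: "F k j \<in> sets borel" if "k \<in> {1..I}" for k j
      unfolding F_def by (rule cont_meas[OF gcont[OF that] Lx_pos])
    have Fsub: "F k j \<subseteq> {0..Lx}" for k j by (auto simp: F_def)
    have Ffin: "emeasure lborel (F k j) \<noteq> \<infinity>" if "k \<in> {1..I}" for k j
    proof -
      have "emeasure lborel (F k j) \<le> emeasure lborel {0..Lx}"
        by (rule emeasure_mono[OF Fsub]) simp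
      moreover have "emeasure lborel {0..Lx} < \<infinity>" using Lx_pos by simp
      ultimately show ?thesis by (auto simp: top_unique)
    qed
    have Arl: "Ar k j \<in> sets lebesgue" if "k \<in> {1..I}" for k j
    proof -
      have "Ar k j \<in> sets (borel :: (real\<times>real) measure)"
        using Fb[OF that] by (simp add: Ar_def borel_prod[symmetric])
      then show ?thesis by simp
    qed
    have measAr: "measure lebesgue (Ar k j) = measure lborel (F k j) * (hs j - hs (j-1))"
      if "k \<in> {1..I}" "j \<in> {1..S}" for k j
      using meas_times[OF Fb[OF that(1)], of "{hs (j-1)..<hs j}"] step[OF that(2)]
      by (simp add: Ar_def)
    have hsH: "-H \<le> hs i \<and> hs i \<le> H" if "i \<le> S" for i
      using monole[of 0 i] monole[of i S] that h0 hS by auto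
    have cover: "supp_diff Lx H hs S eps j \<subseteq> (\<Union>k\<in>{1..I}. Ar k j)" if j: "j \<in> {1..S}" for j
    proof
      fix p assume p: "p \<in> supp_diff Lx H hs S eps j"
      obtain x y where pxy: "p = (x,y)" by (cases p)
      have ps: "p \<in> slice Lx H hs j" and ne: "eps p \<noteq> eps_h Lx H hs S eps p"
        using p by (auto simp: supp_diff_def)
      have x: "0 < x" "x < Lx" and yH: "-H < y" "y < H" and ya: "hs (j-1) \<le> y" "y < hs j"
        using ps pxy by (auto simp: slice_def Omega_def)
      define m where "m = (hs (j-1) + hs j)/2"
      have st: "hs (j-1) < hs j" using step[OF j] .
      have ma: "hs (j-1) \<le> m" "m < hs j" using st by (auto simp: m_def)
      have h1: "-H \<le> hs (j-1)" using hsH[of "j-1"] j by auto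
      have h2: "hs j \<le> H" using hsH[of j] j by auto
      have mH: "-H < m" "m < H" using st h1 h2 by (auto simp: m_def)
      show "p \<in> (\<Union>k\<in>{1..I}. Ar k j)"
      proof (rule ccontr)
        assume nin: "p \<notin> (\<Union>k\<in>{1..I}. Ar k j)"
        have nog: "\<forall>k\<in>{1..I}. \<not> (hs (j-1) \<le> g k x \<and> g k x < hs j)"
          using nin x ya pxy by (auto simp: Ar_def F_def)
        have "eps (x,y) = eps (x,m)"
          by (rule layer_eq[OF c x yH mH nog ya ma])
        moreover have "eps_h Lx H hs S eps p = eps (x, m)"
          using epsh[OF j ps] pxy by (simp add: m_def)
        ultimately show False using ne pxy by simp
      qed
    qed
    have box: "Ar k j \<subseteq> cbox (0, -H) (Lx, H)" if "j \<in> {1..S}" for k j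
    proof -
      have h1: "-H \<le> hs (j-1)" using hsH[of "j-1"] that by auto
      have h2: "hs j \<le> H" using hsH[of j] that by auto
      show ?thesis using h1 h2 by (auto simp: Ar_def F_def cbox_Pair_eq)
    qed
    have step1: "measure lebesgue (supp_diff Lx H hs S eps j) \<le> (\<Sum>k\<in>{1..I}. measure lebesgue (Ar k j))"
      if j: "j \<in> {1..S}" for j
    proof -
      have Ul: "(\<Union>k\<in>{1..I}. Ar k j) \<in> sets lebesgue" using Arl by auto
      have Uf: "(\<Union>k\<in>{1..I}. Ar k j) \<in> fmeasurable lebesgue"
        by (rule fmeasurableI2[OF lmeasurable_cbox _ Ul]) (use box[OF j] in blast)
      have "measure lebesgue (supp_diff Lx H hs S eps j) \<le> measure lebesgue (\<Union>k\<in>{1..I}. Ar k j)"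
      proof (cases "supp_diff Lx H hs S eps j \<in> sets lebesgue")
        case True
        then show ?thesis by (rule measure_mono_fmeasurable[OF cover[OF j] _ Uf])
      next
        case False
        then show ?thesis by (simp add: measure_notin_sets)
      qed
      also have "\<dots> \<le> (\<Sum>k\<in>{1..I}. measure lebesgue (Ar k j))"
        by (rule measure_UNION_le) (auto intro: Arl)
      finally show ?thesis .
    qed
    have Fsum: "(\<Sum>j\<in>{1..S}. measure lborel (F k j)) \<le> Lx" if k: "k \<in> {1..I}" for k
    proof -
      have disj: "disjoint_family_on (F k) {1..S}"
        unfolding disjoint_family_on_def
      proof (intro ballI impI)
        fix i j assume i: "i \<in> {1..S}" and j: "j \<in> {1..S}" and ne: "i \<noteq> j"
        show "F k i \<inter> F k j = {}"
        proof (cases "i < j")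
          case True
          then have "hs i \<le> hs (j-1)" using j by (intro monole) auto
          then show ?thesis by (auto simp: F_def)
        next
          case False
          then have "hs j \<le> hs (i-1)" using i ne by (intro monole) auto
          then show ?thesis by (auto simp: F_def)
        qed
      qed
      have "(\<Sum>j\<in>{1..S}. measure lborel (F k j)) = measure lborel (\<Union>j\<in>{1..S}. F k j)"
        by (rule measure_finite_Union[symmetric]) (use disj Fb[OF k] Ffin[OF k] in auto)
      also have "\<dots> \<le> measure lborel {0..Lx}"
        by (rule measure_mono_fmeasurable) (use Fb[OF k] Fsub fmeasurable_cbox[of 0 Lx, unfolded cbox_interval] in \<open>auto simp del: atLeastAtMost_iff\<close>)
      also have "\<dots> = Lx" using Lx_pos by simp
      finally show ?thesis .
    qed
    have "(\<Sum>j=1..S. measure lebesgue (supp_diff Lx H hs S eps j))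
          \<le> (\<Sum>j=1..S. \<Sum>k\<in>{1..I}. measure lebesgue (Ar k j))"
      by (rule sum_mono) (rule step1)
    also have "\<dots> = (\<Sum>j=1..S. \<Sum>k\<in>{1..I}. measure lborel (F k j) * (hs j - hs (j-1)))"
      by (intro sum.cong refl) (simp add: measAr)
    also have "\<dots> \<le> (\<Sum>j=1..S. \<Sum>k\<in>{1..I}. measure lborel (F k j) * hmax hs S)"
      by (intro sum_mono mult_left_mono hmax_ge) auto
    also have "\<dots> = hmax hs S * (\<Sum>k\<in>{1..I}. \<Sum>j=1..S. measure lborel (F k j))"
      by (subst sum.swap) (simp add: sum_distrib_left sum_distrib_right mult.commute)
    also have "\<dots> \<le> hmax hs S * (\<Sum>k\<in>{1..I}. Lx)"
      by (intro mult_left_mono hmax_nn sum_mono Fsum)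
    also have "\<dots> = hmax hs S * (real I * Lx)" by simp
    also have "\<dots> \<le> C9 * hmax hs S" using hmax_nn by (simp add: C9_def algebra_simps)
    finally show "(\<Sum>j=1..S. measure lebesgue (supp_diff Lx H hs S eps j)) \<le> C9 * hmax hs S" .
  qed
qed

end
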